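(* Let $\Delta(x,\hat x)=(x-\hat x)^2$ and $\phi(p_X,p_{\hat X})=W_2^2(p_X,p_{\hat X})$, $\mu_X\in\mathbb R$, $\sigma_X>0$, $R,R_c\ge0$, $P\ge0$. Then $$D(R,R_c,P|\mathcal N(\mu_X,\sigma_X^2))=\inf_{p_{\hat X}} D(R,R_c|\mathcal N(\mu_X,\sigma_X^2),p_{\hat X})$$ where the infimum is over distributions $p_{\hat X}$ on $\mathbb R$ with finite second moment satisfying $\mu_{\hat X}=\mu_X$, $\sigma_{\hat X}\le\sigma_X$, and $W_2^2(\mathcal N(\mu_X,\sigma_X^2),p_{\hat X})\le P$.
   Context: All logarithms are natural; $\mu_{\hat X},\sigma_{\hat X}^2$ are the mean and variance of $\hat X\sim p_{\hat X}$. $W_2^2(p,q):=\inf_{\pi\in\Pi(p,q)}\mathbb E_\pi[(A-B)^2]$, where $\Pi(p,q)$ is the set of couplings of $p$ and $q$. For a block length $n\ge1$, a code consists of finite sets $\mathcal J,\mathcal K$, a random seed $K$ uniform on $\mathcal K$ and independent of the source sequence $X^n=(X_1,\dots,X_n)$ (i.i.d. with marginal $p_X$), a stochastic encoder $p_{J|X^nK}$ producing $J\in\mathcal J$, and a stochastic decoder $p_{\hat X^n|JK}$ producing $\hat X^n\in\mathbb R^n$. $D(R,R_c|p_X,p_{\hat X})$: $D$ is achievable with respect to $p_{\hat X}$ subject to $(R,R_c)$ if for some $n$ there is such a code with $\frac1n\log|\mathcal J|\le R$, $\frac1n\log|\mathcal K|\le R_c$, $\frac1n\sum_t\mathbb E[\Delta(X_t,\hat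 X_t)]\le D$, and $\hat X_1,\dots,\hat X_n$ i.i.d. with marginal $p_{\hat X}$; $D(R,R_c|p_X,p_{\hat X})$ is the infimum of achievable $D$. $D(R,R_c,P|p_X)$: $D$ is achievable subject to $(R,R_c)$ and perception constraint $P$ if for some $n$ there is such a code with the same rate and distortion constraints, $\frac1n\sum_t\phi(p_{X_t},p_{\hat X_t})\le P$, and $\hat X_1,\dots,\hat X_n$ i.i.d. (with some marginal); $D(R,R_c,P|p_X)$ is the infimum of achievable $D$. *)

theory Defs
  imports "HOL-Probability.Probability"
begin

text \<open>Gaussian source law N(mu, sigma^2) (sigma = standard deviation).\<close>
definition gauss :: "real \<Rightarrow> real \<Rightarrow> real measure" where
  "gauss \<mu> \<sigma> = density lborel (normal_density \<mu> \<sigma>)"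

definition couplings :: "real measure \<Rightarrow> real measure \<Rightarrow> (real \<times> real) measure set" where
  "couplings p q = {\<pi>. prob_space \<pi> \<and> sets \<pi> = sets (borel :: (real \<times> real) measure)
      \<and> distr \<pi> borel fst = p \<and> distr \<pi> borel snd = q}"

definition W2sq :: "real measure \<Rightarrow> real measure \<Rightarrow> ennreal" where
  "W2sq p q = (INF \<pi> \<in> couplings p q. \<integral>\<^sup>+ z. ennreal ((fst z - snd z)\<^sup>2) \<partial>\<pi>)"

definition real_law :: "real measure \<Rightarrow> bool" where
  "real_law q \<longleftrightarrow> prob_space q \<and> sets q = sets (borel :: real measure)"

definition mean :: "real measure \<Rightarrow> real" where
  "mean q = (\<integral> x. x \<partial>q)"

definition std_dev :: "real measure \<Rightarrow> real" where
  "std_dev q = sqrt (\<integral> x. (x - mean q)\<^sup>2 \<partial>q)"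

text \<open>J = {..<M}, K = {..<L}; the seed is uniform on K and independent of X^n.
  enc x k j = p_{J|X^n K}(j | x, k);  dec j k = law of \<hat>X^n given (J,K) = (j,k).\<close>
definition is_code :: "nat \<Rightarrow> nat \<Rightarrow> nat \<Rightarrow> ((nat \<Rightarrow> real) \<Rightarrow> nat \<Rightarrow> nat \<Rightarrow> real)
    \<Rightarrow> (nat \<Rightarrow> nat \<Rightarrow> (nat \<Rightarrow> real) measure) \<Rightarrow> bool" where
  "is_code n M L enc dec \<longleftrightarrow> n \<ge> 1 \<and> M \<ge> 1 \<and> L \<ge> 1
     \<and> (\<forall>x k j. 0 \<le> enc x k j)
     \<and> (\<forall>x k. k < L \<longrightarrow> (\<Sum>j<M. enc x k j) = 1)
     \<and> (\<forall>k j. (\<lambda>x. enc x k j) \<in> borel_measurable (PiM {..<n} (\<lambda>_. borel)))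
     \<and> (\<forall>j<M. \<forall>k<L. prob_space (dec j k)
            \<and> sets (dec j k) = sets (PiM {..<n} (\<lambda>_. (borel :: real measure))))"

definition src :: "real measure \<Rightarrow> nat \<Rightarrow> (nat \<Rightarrow> real) measure" where
  "src pX n = PiM {..<n} (\<lambda>_. pX)"

definition recon_prob :: "real measure \<Rightarrow> nat \<Rightarrow> nat \<Rightarrow> nat \<Rightarrow> ((nat \<Rightarrow> real) \<Rightarrow> nat \<Rightarrow> nat \<Rightarrow> real)
    \<Rightarrow> (nat \<Rightarrow> nat \<Rightarrow> (nat \<Rightarrow> real) measure) \<Rightarrow> (nat \<Rightarrow> real) set \<Rightarrow> real" where
  "recon_prob pX n M L enc dec A =
     (\<Sum>k<L. \<Sum>j<M. (1 / real L) * (\<integral> x. enc x k j \<partial>src pX n) * measure (dec j k) A)"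

definition avg_distortion :: "real measure \<Rightarrow> nat \<Rightarrow> nat \<Rightarrow> nat \<Rightarrow> ((nat \<Rightarrow> real) \<Rightarrow> nat \<Rightarrow> nat \<Rightarrow> real)
    \<Rightarrow> (nat \<Rightarrow> nat \<Rightarrow> (nat \<Rightarrow> real) measure) \<Rightarrow> ennreal" where
  "avg_distortion pX n M L enc dec =
     ennreal (1 / real n) * (\<Sum>t<n. \<Sum>k<L. \<Sum>j<M. ennreal (1 / real L) *
        (\<integral>\<^sup>+ x. ennreal (enc x k j) * (\<integral>\<^sup>+ y. ennreal ((x t - y t)\<^sup>2) \<partial>dec j k) \<partial>src pX n))"

definition recon_iid :: "real measure \<Rightarrow> nat \<Rightarrow> nat \<Rightarrow> nat \<Rightarrow> ((nat \<Rightarrow> real) \<Rightarrow> nat \<Rightarrow> nat \<Rightarrow> real)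
    \<Rightarrow> (nat \<Rightarrow> nat \<Rightarrow> (nat \<Rightarrow> real) measure) \<Rightarrow> real measure \<Rightarrow> bool" where
  "recon_iid pX n M L enc dec q \<longleftrightarrow>
     (\<forall>A \<in> sets (PiM {..<n} (\<lambda>_. (borel :: real measure))).
        recon_prob pX n M L enc dec A = measure (PiM {..<n} (\<lambda>_. q)) A)"

definition D_marg :: "real \<Rightarrow> real \<Rightarrow> real measure \<Rightarrow> real measure \<Rightarrow> ennreal" where
  "D_marg R Rc pX q = Inf {D. \<exists>n M L enc dec. is_code n M L enc dec
      \<and> ln (real M) / real n \<le> R \<and> ln (real L) / real n \<le> Rc
      \<and> avg_distortion pX n M L enc dec \<le> D
      \<and> recon_iid pX n M L enc dec q}"

text \<open>D(R,R_c,P | p_X) (squared-error distortion, perception measure W_2^2).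
  Since \<hat>X_t has marginal q for every t, p_{\<hat>X_t} = q and p_{X_t} = p_X.\<close>
definition D_perc :: "real \<Rightarrow> real \<Rightarrow> real \<Rightarrow> real measure \<Rightarrow> ennreal" where
  "D_perc R Rc P pX = Inf {D. \<exists>n M L enc dec q. is_code n M L enc dec
      \<and> ln (real M) / real n \<le> R \<and> ln (real L) / real n \<le> Rc
      \<and> avg_distortion pX n M L enc dec \<le> D
      \<and> real_law q \<and> recon_iid pX n M L enc dec q
      \<and> ennreal (1 / real n) * (\<Sum>t<n. W2sq pX q) \<le> ennreal P}"

end

theory Submission
  imports Defs
begin



lemma gauss_prob: "0 < \<sigma> \<Longrightarrow> prob_space (gauss \<mu> \<sigma>)"
  unfolding gauss_def by (rule prob_space_normal_density)

lemma sets_gauss[simp, measurable_cong]: "sets (gauss \<mu> \<sigma>) = sets borel"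
  unfolding gauss_def by simp

lemma gauss_integrable_pow:
  assumes "0 < \<sigma>" shows "integrable (gauss \<mu> \<sigma>) (\<lambda>x. (x - \<mu>) ^ k)"
  unfolding gauss_def
  by (subst integrable_density) (auto simp: integrable_normal_moment[OF assms])

lemma gauss_integral_1:
  assumes "0 < \<sigma>" shows "(\<integral>x. (x - \<mu>) \<partial>gauss \<mu> \<sigma>) = 0"
  unfolding gauss_def
  using integral_normal_moment_odd[OF assms, of \<mu> 0]
  by (subst integral_density) auto

lemma gauss_integral_2:
  assumes "0 < \<sigma>" shows "(\<integral>x. (x - \<mu>)^2 \<partial>gauss \<mu> \<sigma>) = \<sigma>^2"
  unfolding gauss_def
  using integral_normal_moment_even[OF assms, of \<mu> 1]
  by (subst integral_density) (auto simp: power2_eq_square)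




definition cfac :: "real \<Rightarrow> real measure \<Rightarrow> real" where
  "cfac \<sigma> q = (if std_dev q \<le> \<sigma> then 1 else \<sigma> / std_dev q)"

definition tmap :: "real \<Rightarrow> real \<Rightarrow> real measure \<Rightarrow> real \<Rightarrow> real" where
  "tmap \<mu> \<sigma> q y = \<mu> + cfac \<sigma> q * (y - mean q)"

lemma law_facts:
  assumes "real_law q" "integrable q (\<lambda>x. x^2)"
  shows "integrable q (\<lambda>x. x)" "integrable q (\<lambda>x. (x - c)^2)"
    "(\<integral>x. (x - mean q) \<partial>q) = 0" "(\<integral>x. (x - mean q)^2 \<partial>q) = std_dev q ^ 2"
    "std_dev q \<ge> 0"
proof -
  interpret prob_space q using assms(1) by (simp add: real_law_def)
  have sq: "sets q = sets borel" using assms(1) by (simp add: real_law_def)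
  have m: "(\<lambda>x. x) \<in> borel_measurable q" by (subst measurable_cong_sets[OF sq refl]) simp
  show i1: "integrable q (\<lambda>x. x)"
    by (rule square_integrable_imp_integrable[OF m assms(2)])
  have e: "(\<lambda>x. (x - c)^2) = (\<lambda>x. x^2 - 2 * c * x + c^2)" for c :: real
    by (auto simp: power2_eq_square algebra_simps)
  show i2: "integrable q (\<lambda>x. (x - c)^2)" for c
    unfolding e using i1 assms(2) by auto
  show "(\<integral>x. (x - mean q) \<partial>q) = 0"
    using i1 by (simp add: mean_def prob_space)
  have "0 \<le> (\<integral>x. (x - mean q)^2 \<partial>q)" by (rule Bochner_Integration.integral_nonneg) auto
  then show "(\<integral>x. (x - mean q)^2 \<partial>q) = std_dev q ^ 2"
    by (simp add: std_dev_def)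
  show "std_dev q \<ge> 0" by (simp add: std_dev_def)
qed

lemma ennreal_cancel_aux:
  fixes A B N P :: ennreal
  assumes "A + N \<le> B + P" "P \<le> N" "N \<noteq> \<top>"
  shows "A \<le> B"
proof -
  have "N + A \<le> N + B" using assms(1,2) by (metis add.commute add_left_mono order_trans)
  then show ?thesis using assms(3) by (simp add: ennreal_add_left_cancel_le)
qed

lemma transport:
  fixes \<Phi> :: "(real \<Rightarrow> real \<Rightarrow> ennreal) \<Rightarrow> ennreal"
  assumes \<sigma>: "0 < \<sigma>" and q: "real_law q" "integrable q (\<lambda>x. x^2)"
  assumes add: "\<And>g h. (\<lambda>(a,b). g a b) \<in> borel_measurable (borel \<Otimes>\<^sub>M borel) \<Longrightarrow>
        (\<lambda>(a,b). h a b) \<in> borel_measurable (borel \<Otimes>\<^sub>M borel) \<Longrightarrow>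
        \<Phi> (\<lambda>a b. g a b + h a b) = \<Phi> g + \<Phi> h"
  assumes mono: "\<And>g h. (\<And>a b. g a b \<le> h a b) \<Longrightarrow> \<Phi> g \<le> \<Phi> h"
  assumes mx: "\<And>h. h \<in> borel_measurable borel \<Longrightarrow> \<Phi> (\<lambda>a b. h a) = (\<integral>\<^sup>+a. h a \<partial>gauss \<mu> \<sigma>)"
  assumes my: "\<And>h. h \<in> borel_measurable borel \<Longrightarrow> \<Phi> (\<lambda>a b. h b) = (\<integral>\<^sup>+b. h b \<partial>q)"
  shows "\<Phi> (\<lambda>a b. ennreal ((a - tmap \<mu> \<sigma> q b)^2)) \<le> \<Phi> (\<lambda>a b. ennreal ((a - b)^2))"
proof -
  define G where "G = gauss \<mu> \<sigma>"
  define m where "m = mean q"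
  define s where "s = std_dev q"
  define c where "c = cfac \<sigma> q"
  define d where "d = \<mu> - m"
  define H where "H = (\<lambda>x. (1-c) * (s/\<sigma>) * (x-\<mu>)^2 - 2 * d * (x-\<mu>) - d^2)"
  define K where "K = (\<lambda>y. -(1-c) * (y-m)^2 + 2 * d * (y-m))"
  have s0: "0 \<le> s" using law_facts(5)[OF q] by (simp add: s_def)
  have f: "tmap \<mu> \<sigma> q b = \<mu> + c * (b - m)" for b by (simp add: tmap_def c_def m_def)
  have pw: "(a - tmap \<mu> \<sigma> q b)^2 \<le> (a - b)^2 + H a + K b" for a b
  proof (cases "s \<le> \<sigma>")
    case True
    then have "c = 1" by (simp add: c_def cfac_def s_def)
    then show ?thesis unfolding f H_def K_def d_def by (simp add: power2_eq_square algebra_simps)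
  next
    case False
    then have c: "c = \<sigma> / s" and ss: "\<sigma> < s" by (auto simp: c_def cfac_def s_def)
    define uu where "uu = a - \<mu>"
    define vv where "vv = b - m"
    have c1: "0 \<le> 1 - c" using ss \<sigma> by (simp add: c)
    have "c * vv^2 - 2 * uu * vv + (s / \<sigma>) * uu^2 = (\<sigma> * vv - s * uu)^2 / (\<sigma> * s)"
      using ss \<sigma> by (simp add: c field_simps power2_eq_square)
    also have "\<dots> \<ge> 0" using ss \<sigma> by simp
    finally have "0 \<le> (1-c) * (c * vv^2 - 2 * uu * vv + (s / \<sigma>) * uu^2)" using c1 by simp
    moreover have "(a - b)^2 + H a + K b - (a - tmap \<mu> \<sigma> q b)^2 = (1-c) * (c * vv^2 - 2 * uu * vv + (s / \<sigma>) * uu^2)"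
      unfolding f H_def K_def d_def uu_def vv_def using \<sigma> by (simp add: power2_eq_square field_simps)
    ultimately show ?thesis by simp
  qed
  have csum: "(1-c) * s * \<sigma> - d^2 - (1-c) * s^2 \<le> 0"
  proof (cases "s \<le> \<sigma>")
    case True
    then have "c = 1" by (simp add: c_def cfac_def s_def)
    then show ?thesis by simp
  next
    case False
    then have c: "c = \<sigma> / s" and ss: "\<sigma> < s" by (auto simp: c_def cfac_def s_def)
    have "0 \<le> 1 - c" using ss \<sigma> by (simp add: c)
    moreover have "s * \<sigma> - s^2 \<le> 0" using ss s0 by (simp add: power2_eq_square mult_left_mono)
    ultimately have "(1-c) * (s * \<sigma> - s^2) \<le> 0" by (simp add: mult_nonneg_nonpos)
    then show ?thesis by (simp add: algebra_simps) (smt (verit) zero_le_power2)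
  qed
  have iG: "integrable G (\<lambda>x. (x - \<mu>) ^ k)" for k unfolding G_def by (rule gauss_integrable_pow[OF \<sigma>])
  have iG1: "integrable G (\<lambda>x. (x - \<mu>))" using iG[of 1] by simp
  have pG: "prob_space G" unfolding G_def by (rule gauss_prob[OF \<sigma>])
  have intH: "integrable G H" unfolding H_def using iG[of 2] iG1 pG by (auto intro!: finite_measure.integrable_const prob_space.finite_measure)
  have IH: "(\<integral>x. H x \<partial>G) = (1-c) * s * \<sigma> - d^2"
  proof -
    have "(\<integral>x. H x \<partial>G) = (1-c) * (s/\<sigma>) * (\<integral>x. (x-\<mu>)^2 \<partial>G) - 2 * d * (\<integral>x. (x-\<mu>) \<partial>G) - d^2"
    proof -
      define al where "al = (1-c) * (s/\<sigma>)"
      interpret GG: prob_space G by (rule pG)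
      have "(\<integral>x. H x \<partial>G) = (\<integral>x. al * (x-\<mu>)^2 - 2 * d * (x-\<mu>) \<partial>G) - (\<integral>x. d^2 \<partial>G)"
        unfolding H_def al_def using iG[of 2] iG1 by (intro Bochner_Integration.integral_diff) auto
      also have "(\<integral>x. al * (x-\<mu>)^2 - 2 * d * (x-\<mu>) \<partial>G) = (\<integral>x. al * (x-\<mu>)^2 \<partial>G) - (\<integral>x. 2 * d * (x-\<mu>) \<partial>G)"
        using iG[of 2] iG1 by (intro Bochner_Integration.integral_diff) auto
      finally show ?thesis by (simp add: al_def GG.prob_space)
    qed
    also have "\<dots> = (1-c) * s * \<sigma> - d^2" using gauss_integral_1[OF \<sigma>] gauss_integral_2[OF \<sigma>] \<sigma>
      by (simp add: G_def power2_eq_square)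
    finally show ?thesis .
  qed
  have pq: "prob_space q" using q by (simp add: real_law_def)
  have iq1: "integrable q (\<lambda>x. x - m)" using law_facts(1)[OF q] pq by (auto intro!: finite_measure.integrable_const prob_space.finite_measure)
  have intK: "integrable q K" unfolding K_def using law_facts(2)[OF q] iq1 by auto
  have IK: "(\<integral>x. K x \<partial>q) = -(1-c) * s^2"
  proof -
    have "(\<integral>x. K x \<partial>q) = -(1-c) * (\<integral>x. (x-m)^2 \<partial>q) + 2 * d * (\<integral>x. (x-m) \<partial>q)"
      unfolding K_def using law_facts(2)[OF q] iq1 by simp
    also have "\<dots> = -(1-c) * s^2" using law_facts(3,4)[OF q] by (simp add: m_def s_def)
    finally show ?thesis .
  qed
  define Hp where "Hp = (\<lambda>x. max 0 (H x))"
  define Hn where "Hn = (\<lambda>x. max 0 (- H x))"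
  define Kp where "Kp = (\<lambda>x. max 0 (K x))"
  define Kn where "Kn = (\<lambda>x. max 0 (- K x))"
  have iHp: "integrable G Hp" "integrable G Hn" unfolding Hp_def Hn_def using intH by auto
  have iKp: "integrable q Kp" "integrable q Kn" unfolding Kp_def Kn_def using intK by auto
  have dH: "(\<integral>x. Hp x \<partial>G) - (\<integral>x. Hn x \<partial>G) = (\<integral>x. H x \<partial>G)"
  proof -
    have "(\<integral>x. Hp x \<partial>G) - (\<integral>x. Hn x \<partial>G) = (\<integral>x. Hp x - Hn x \<partial>G)"
      using iHp by (rule Bochner_Integration.integral_diff[symmetric])
    also have "\<dots> = (\<integral>x. H x \<partial>G)"
      by (rule Bochner_Integration.integral_cong) (auto simp: Hp_def Hn_def max_def)
    finally show ?thesis .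
  qed
  have dK: "(\<integral>x. Kp x \<partial>q) - (\<integral>x. Kn x \<partial>q) = (\<integral>x. K x \<partial>q)"
  proof -
    have "(\<integral>x. Kp x \<partial>q) - (\<integral>x. Kn x \<partial>q) = (\<integral>x. Kp x - Kn x \<partial>q)"
      using iKp by (rule Bochner_Integration.integral_diff[symmetric])
    also have "\<dots> = (\<integral>x. K x \<partial>q)"
      by (rule Bochner_Integration.integral_cong) (auto simp: Kp_def Kn_def max_def)
    finally show ?thesis .
  qed
  have mH[measurable]: "H \<in> borel_measurable borel" unfolding H_def by measurable
  have mK[measurable]: "K \<in> borel_measurable borel" unfolding K_def by measurable
  have mHp[measurable]: "Hp \<in> borel_measurable borel" "Hn \<in> borel_measurable borel"
    unfolding Hp_def Hn_def by measurable
  have mKp[measurable]: "Kp \<in> borel_measurable borel" "Kn \<in> borel_measurable borel"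
    unfolding Kp_def Kn_def by measurable
  have mf[measurable]: "tmap \<mu> \<sigma> q \<in> borel_measurable borel" unfolding tmap_def by measurable
  have nHp1: "(\<integral>\<^sup>+x. ennreal (Hp x) \<partial>G) = ennreal (\<integral>x. Hp x \<partial>G)"
    using iHp(1) by (rule nn_integral_eq_integral) (auto simp: Hp_def)
  have nHp2: "(\<integral>\<^sup>+x. ennreal (Hn x) \<partial>G) = ennreal (\<integral>x. Hn x \<partial>G)"
    using iHp(2) by (rule nn_integral_eq_integral) (auto simp: Hn_def)
  note nHp = nHp1 nHp2
  have nKp1: "(\<integral>\<^sup>+x. ennreal (Kp x) \<partial>q) = ennreal (\<integral>x. Kp x \<partial>q)"
    using iKp(1) by (rule nn_integral_eq_integral) (auto simp: Kp_def)
  have nKp2: "(\<integral>\<^sup>+x. ennreal (Kn x) \<partial>q) = ennreal (\<integral>x. Kn x \<partial>q)"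
    using iKp(2) by (rule nn_integral_eq_integral) (auto simp: Kn_def)
  note nKp = nKp1 nKp2
  have pw2: "ennreal ((a - tmap \<mu> \<sigma> q b)^2) + ennreal (Hn a) + ennreal (Kn b)
      \<le> ennreal ((a - b)^2) + ennreal (Hp a) + ennreal (Kp b)" for a b
  proof -
    have "(a - tmap \<mu> \<sigma> q b)^2 + Hn a + Kn b \<le> (a - b)^2 + Hp a + Kp b"
      using pw[of a b] by (auto simp: Hp_def Hn_def Kp_def Kn_def max_def)
    then have "ennreal ((a - tmap \<mu> \<sigma> q b)^2 + Hn a + Kn b) \<le> ennreal ((a - b)^2 + Hp a + Kp b)"
      by (rule ennreal_leI)
    then show ?thesis by (simp add: Hp_def Hn_def Kp_def Kn_def ennreal_plus)
  qed
  let ?A = "\<lambda>a b. ennreal ((a - tmap \<mu> \<sigma> q b)^2)"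
  let ?B = "\<lambda>a b. ennreal ((a - b)^2)"
  have e1: "\<Phi> (\<lambda>a b. ?A a b + ennreal (Hn a) + ennreal (Kn b)) = \<Phi> ?A + \<Phi> (\<lambda>a b. ennreal (Hn a)) + \<Phi> (\<lambda>a b. ennreal (Kn b))"
    by (subst add, measurable, subst add, measurable)
  have e2: "\<Phi> (\<lambda>a b. ?B a b + ennreal (Hp a) + ennreal (Kp b)) = \<Phi> ?B + \<Phi> (\<lambda>a b. ennreal (Hp a)) + \<Phi> (\<lambda>a b. ennreal (Kp b))"
    by (subst add, measurable, subst add, measurable)
  have "\<Phi> ?A + (ennreal (\<integral>x. Hn x \<partial>G) + ennreal (\<integral>x. Kn x \<partial>q))
     \<le> \<Phi> ?B + (ennreal (\<integral>x. Hp x \<partial>G) + ennreal (\<integral>x. Kp x \<partial>q))"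
  proof -
    have "\<Phi> (\<lambda>a b. ?A a b + ennreal (Hn a) + ennreal (Kn b)) \<le> \<Phi> (\<lambda>a b. ?B a b + ennreal (Hp a) + ennreal (Kp b))"
      by (rule mono) (rule pw2)
    moreover have "\<Phi> (\<lambda>a b. ennreal (Hn a)) = ennreal (\<integral>x. Hn x \<partial>G)" "\<Phi> (\<lambda>a b. ennreal (Hp a)) = ennreal (\<integral>x. Hp x \<partial>G)"
      "\<Phi> (\<lambda>a b. ennreal (Kn b)) = ennreal (\<integral>x. Kn x \<partial>q)" "\<Phi> (\<lambda>a b. ennreal (Kp b)) = ennreal (\<integral>x. Kp x \<partial>q)"
    proof -
      have mm: "(\<lambda>x. ennreal (Hn x)) \<in> borel_measurable borel" "(\<lambda>x. ennreal (Hp x)) \<in> borel_measurable borel"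
         "(\<lambda>x. ennreal (Kn x)) \<in> borel_measurable borel" "(\<lambda>x. ennreal (Kp x)) \<in> borel_measurable borel"
        by measurable
      show "\<Phi> (\<lambda>a b. ennreal (Hn a)) = ennreal (\<integral>x. Hn x \<partial>G)" "\<Phi> (\<lambda>a b. ennreal (Hp a)) = ennreal (\<integral>x. Hp x \<partial>G)"
      "\<Phi> (\<lambda>a b. ennreal (Kn b)) = ennreal (\<integral>x. Kn x \<partial>q)" "\<Phi> (\<lambda>a b. ennreal (Kp b)) = ennreal (\<integral>x. Kp x \<partial>q)"
        using mx[OF mm(1)] mx[OF mm(2)] my[OF mm(3)] my[OF mm(4)] nHp nKp by (simp_all add: G_def)
    qed
    ultimately show ?thesis unfolding e1 e2 by (simp add: add.assoc)
  qed
  moreover have "ennreal (\<integral>x. Hp x \<partial>G) + ennreal (\<integral>x. Kp x \<partial>q)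
      \<le> ennreal (\<integral>x. Hn x \<partial>G) + ennreal (\<integral>x. Kn x \<partial>q)"
  proof -
    have p: "0 \<le> (\<integral>x. Hp x \<partial>G)" "0 \<le> (\<integral>x. Kp x \<partial>q)" "0 \<le> (\<integral>x. Hn x \<partial>G)" "0 \<le> (\<integral>x. Kn x \<partial>q)"
      by (auto intro!: Bochner_Integration.integral_nonneg simp: Hp_def Hn_def Kp_def Kn_def)
    have "(\<integral>x. Hp x \<partial>G) + (\<integral>x. Kp x \<partial>q) \<le> (\<integral>x. Hn x \<partial>G) + (\<integral>x. Kn x \<partial>q)"
      using dH dK IH IK csum by linarith
    then have "ennreal ((\<integral>x. Hp x \<partial>G) + (\<integral>x. Kp x \<partial>q)) \<le> ennreal ((\<integral>x. Hn x \<partial>G) + (\<integral>x. Kn x \<partial>q))"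
      by (rule ennreal_leI)
    then show ?thesis using p by (simp add: ennreal_plus)
  qed
  ultimately show ?thesis
    by (rule ennreal_cancel_aux) simp
qed



lemma coupling_facts:
  assumes "\<pi> \<in> couplings p q"
  shows "prob_space \<pi>" "sets \<pi> = sets (borel \<Otimes>\<^sub>M borel)"
    "distr \<pi> borel fst = p" "distr \<pi> borel snd = q"
    "fst \<in> measurable \<pi> borel" "snd \<in> measurable \<pi> borel"
    "\<And>g. (\<lambda>(a,b). g a b) \<in> borel_measurable (borel \<Otimes>\<^sub>M borel) \<Longrightarrow> (\<lambda>z. g (fst z) (snd z)) \<in> borel_measurable \<pi>"
proof -
  have bp: "sets (borel \<Otimes>\<^sub>M borel) = sets (borel :: (real \<times> real) measure)" by (simp only: borel_prod)
  show sp: "sets \<pi> = sets (borel \<Otimes>\<^sub>M borel)" using assms bp by (simp add: couplings_def)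
  show "prob_space \<pi>" "distr \<pi> borel fst = p" "distr \<pi> borel snd = q" using assms by (auto simp: couplings_def)
  show "fst \<in> measurable \<pi> borel" "snd \<in> measurable \<pi> borel"
    by (subst measurable_cong_sets[OF sp refl], simp)+
  show "(\<lambda>z. g (fst z) (snd z)) \<in> borel_measurable \<pi>"
    if "(\<lambda>(a,b). g a b) \<in> borel_measurable (borel \<Otimes>\<^sub>M borel)" for g
  proof -
    have "(\<lambda>z. g (fst z) (snd z)) = (\<lambda>(a,b). g a b)" by auto
    then show ?thesis using that by (simp add: measurable_cong_sets[OF sp refl])
  qed
qed

lemma W2_transport:
  assumes \<sigma>: "0 < \<sigma>" and q: "real_law q" "integrable q (\<lambda>x. x^2)"
    and pi: "\<pi> \<in> couplings (gauss \<mu> \<sigma>) q"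
  shows "(\<integral>\<^sup>+z. ennreal ((fst z - tmap \<mu> \<sigma> q (snd z))^2) \<partial>\<pi>) \<le> (\<integral>\<^sup>+z. ennreal ((fst z - snd z)^2) \<partial>\<pi>)"
proof -
  note cf = coupling_facts[OF pi]
  have "(\<lambda>g. \<integral>\<^sup>+z. g (fst z) (snd z) \<partial>\<pi>) (\<lambda>a b. ennreal ((a - tmap \<mu> \<sigma> q b)^2))
     \<le> (\<lambda>g. \<integral>\<^sup>+z. g (fst z) (snd z) \<partial>\<pi>) (\<lambda>a b. ennreal ((a - b)^2))"
  proof (rule transport[OF \<sigma> q])
    show "(\<integral>\<^sup>+z. g (fst z) (snd z) + h (fst z) (snd z) \<partial>\<pi>) = (\<integral>\<^sup>+z. g (fst z) (snd z) \<partial>\<pi>) + (\<integral>\<^sup>+z. h (fst z) (snd z) \<partial>\<pi>)"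
      if "(\<lambda>(a,b). g a b) \<in> borel_measurable (borel \<Otimes>\<^sub>M borel)" "(\<lambda>(a,b). h a b) \<in> borel_measurable (borel \<Otimes>\<^sub>M borel)" for g h
      using cf(7)[OF that(1)] cf(7)[OF that(2)] by (rule nn_integral_add)
    show "(\<integral>\<^sup>+z. g (fst z) (snd z) \<partial>\<pi>) \<le> (\<integral>\<^sup>+z. h (fst z) (snd z) \<partial>\<pi>)" if "\<And>a b. g a b \<le> h a b" for g h
      using that by (intro nn_integral_mono) auto
    show "(\<integral>\<^sup>+z. h (fst z) \<partial>\<pi>) = (\<integral>\<^sup>+a. h a \<partial>gauss \<mu> \<sigma>)" if "h \<in> borel_measurable borel" for h
    proof -
      have "(\<integral>\<^sup>+a. h a \<partial>distr \<pi> borel fst) = (\<integral>\<^sup>+z. h (fst z) \<partial>\<pi>)"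
        by (rule nn_integral_distr[OF cf(5)]) (simp add: that)
      then show ?thesis using cf(3) by simp
    qed
    show "(\<integral>\<^sup>+z. h (snd z) \<partial>\<pi>) = (\<integral>\<^sup>+a. h a \<partial>q)" if "h \<in> borel_measurable borel" for h
    proof -
      have "(\<integral>\<^sup>+a. h a \<partial>distr \<pi> borel snd) = (\<integral>\<^sup>+z. h (snd z) \<partial>\<pi>)"
        by (rule nn_integral_distr[OF cf(6)]) (simp add: that)
      then show ?thesis using cf(4) by simp
    qed
  qed
  then show ?thesis by simp
qed

lemma gauss_sq_finite:
  assumes "0 < \<sigma>" shows "(\<integral>\<^sup>+x. ennreal (x^2) \<partial>gauss \<mu> \<sigma>) < \<top>"
proof -
  interpret G: prob_space "gauss \<mu> \<sigma>" by (rule gauss_prob[OF assms])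
  have e: "(\<lambda>x. x^2) = (\<lambda>x::real. (x - \<mu>)^2 + 2 * \<mu> * (x - \<mu>) + \<mu>^2)"
    by (auto simp: power2_eq_square algebra_simps)
  have i: "integrable (gauss \<mu> \<sigma>) (\<lambda>x. x^2)"
    unfolding e using gauss_integrable_pow[OF assms, of \<mu> 2] gauss_integrable_pow[OF assms, of \<mu> 1] by auto
  have "(\<integral>\<^sup>+x. ennreal (x^2) \<partial>gauss \<mu> \<sigma>) = ennreal (\<integral>x. x^2 \<partial>gauss \<mu> \<sigma>)"
    using i by (rule nn_integral_eq_integral) auto
  then show ?thesis by simp
qed

lemma W2_finite_moment:
  assumes \<sigma>: "0 < \<sigma>" and q: "real_law q" and W: "W2sq (gauss \<mu> \<sigma>) q < \<top>"
  shows "integrable q (\<lambda>x. x^2)"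
proof -
  obtain \<pi> where pi: "\<pi> \<in> couplings (gauss \<mu> \<sigma>) q" and fin: "(\<integral>\<^sup>+ z. ennreal ((fst z - snd z)\<^sup>2) \<partial>\<pi>) < \<top>"
    using W unfolding W2sq_def INF_less_iff by blast
  note cf = coupling_facts[OF pi]
  have sq: "sets q = sets borel" using q by (simp add: real_law_def)
  have "(\<integral>\<^sup>+x. ennreal (norm (x^2)) \<partial>q) = (\<integral>\<^sup>+z. ennreal ((snd z)^2) \<partial>\<pi>)"
  proof -
    have "(\<integral>\<^sup>+a. ennreal (a^2) \<partial>distr \<pi> borel snd) = (\<integral>\<^sup>+z. ennreal ((snd z)^2) \<partial>\<pi>)"
      by (rule nn_integral_distr[OF cf(6)]) simp
    then show ?thesis using cf(4) by simp
  qed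
  also have "\<dots> \<le> (\<integral>\<^sup>+z. 2 * ennreal ((fst z)^2) + 2 * ennreal ((fst z - snd z)^2) \<partial>\<pi>)"
  proof (rule nn_integral_mono)
    fix z :: "real \<times> real"
    have "(snd z)^2 \<le> 2 * (fst z)^2 + 2 * (fst z - snd z)^2"
    proof -
      have "2 * (fst z)^2 + 2 * (fst z - snd z)^2 - (snd z)^2 = (2 * fst z - snd z)^2"
        by (simp add: power2_eq_square algebra_simps)
      moreover have "(2 * fst z - snd z)^2 \<ge> 0" by simp
      ultimately show ?thesis by linarith
    qed
    then have "ennreal ((snd z)^2) \<le> ennreal (2 * (fst z)^2 + 2 * (fst z - snd z)^2)" by (rule ennreal_leI)
    then show "ennreal ((snd z)^2) \<le> 2 * ennreal ((fst z)^2) + 2 * ennreal ((fst z - snd z)^2)"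
      by (simp add: ennreal_mult ennreal_plus)
  qed
  also have "\<dots> = 2 * (\<integral>\<^sup>+z. ennreal ((fst z)^2) \<partial>\<pi>) + 2 * (\<integral>\<^sup>+z. ennreal ((fst z - snd z)^2) \<partial>\<pi>)"
    using cf(5,6) by (simp add: nn_integral_add nn_integral_cmult)
  also have "(\<integral>\<^sup>+z. ennreal ((fst z)^2) \<partial>\<pi>) = (\<integral>\<^sup>+x. ennreal (x^2) \<partial>gauss \<mu> \<sigma>)"
  proof -
    have "(\<integral>\<^sup>+a. ennreal (a^2) \<partial>distr \<pi> borel fst) = (\<integral>\<^sup>+z. ennreal ((fst z)^2) \<partial>\<pi>)"
      by (rule nn_integral_distr[OF cf(5)]) simp
    then show ?thesis using cf(3) by simp
  qed
  finally have le: "(\<integral>\<^sup>+x. ennreal (norm (x^2)) \<partial>q) \<le> 2 * (\<integral>\<^sup>+x. ennreal (x^2) \<partial>gauss \<mu> \<sigma>) + 2 * (\<integral>\<^sup>+z. ennreal ((fst z - snd z)^2) \<partial>\<pi>)" .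
  have "2 * (\<integral>\<^sup>+x. ennreal (x^2) \<partial>gauss \<mu> \<sigma>) + 2 * (\<integral>\<^sup>+z. ennreal ((fst z - snd z)^2) \<partial>\<pi>) < \<top>"
    using gauss_sq_finite[OF \<sigma>, of \<mu>] fin by (simp add: ennreal_mult_less_top)
  with le have "(\<integral>\<^sup>+x. ennreal (norm (x^2)) \<partial>q) < \<top>" by (rule order.strict_trans1)
  moreover have "(\<lambda>x. x^2) \<in> borel_measurable q" by (subst measurable_cong_sets[OF sq refl]) simp
  ultimately show ?thesis by (intro integrableI_bounded) auto
qed




lemma mfst_snd: "fst \<in> borel_measurable (borel :: (real \<times> real) measure)"
  "snd \<in> borel_measurable (borel :: (real \<times> real) measure)"
  by (subst borel_prod[symmetric], simp)+

lemma mdiff2: "(\<lambda>z. (fst z - snd z)^2) \<in> borel_measurable (borel :: (real \<times> real) measure)"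
  by (subst borel_prod[symmetric]) measurable

lemma tq_facts:
  fixes \<mu> \<sigma> :: real and q :: "real measure"
  assumes \<sigma>: "0 < \<sigma>" and q: "real_law q" "integrable q (\<lambda>x. x^2)"
  defines "q' \<equiv> distr q borel (tmap \<mu> \<sigma> q)"
  shows "real_law q'" "integrable q' (\<lambda>x. x^2)" "mean q' = \<mu>" "std_dev q' \<le> \<sigma>"
    "W2sq (gauss \<mu> \<sigma>) q' \<le> W2sq (gauss \<mu> \<sigma>) q"
proof -
  interpret Q: prob_space q using q by (simp add: real_law_def)
  have sq: "sets q = sets borel" using q by (simp add: real_law_def)
  define c where "c = cfac \<sigma> q"
  define m where "m = mean q"
  define s where "s = std_dev q"
  have f: "tmap \<mu> \<sigma> q = (\<lambda>y. \<mu> + c * (y - m))" by (auto simp: tmap_def c_def m_def)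
  have mf[measurable]: "tmap \<mu> \<sigma> q \<in> borel_measurable borel" unfolding tmap_def by measurable
  have mfq: "tmap \<mu> \<sigma> q \<in> borel_measurable q" by (subst measurable_cong_sets[OF sq refl]) (rule mf)
  show "real_law q'" unfolding q'_def real_law_def using mfq by (auto intro!: Q.prob_space_distr)
  note lf = law_facts[OF q]
  have i1: "integrable q (\<lambda>x. x - m)" using lf(1) by auto
  have e2: "(\<lambda>y. (tmap \<mu> \<sigma> q y)^2) = (\<lambda>y. c^2 * (y - m)^2 + 2 * \<mu> * c * (y - m) + \<mu>^2)"
    unfolding f by (auto simp: power2_eq_square algebra_simps)
  have "integrable q (\<lambda>y. (tmap \<mu> \<sigma> q y)^2)" unfolding e2 using lf(2)[of m] i1 by auto
  then show "integrable q' (\<lambda>x. x^2)" unfolding q'_def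
    by (subst integrable_distr_eq[OF mfq]) auto
  have "mean q' = (\<integral>y. tmap \<mu> \<sigma> q y \<partial>q)" unfolding q'_def mean_def
    by (rule integral_distr[OF mfq]) simp
  also have "\<dots> = (\<integral>y. \<mu> + c * (y - m) \<partial>q)" unfolding f ..
  also have "\<dots> = \<mu> + c * (\<integral>y. (y - m) \<partial>q)" using i1 by (simp add: Q.prob_space)
  also have "\<dots> = \<mu>" using lf(3) by (simp add: m_def)
  finally show mq: "mean q' = \<mu>" .
  have "(\<integral>x. (x - mean q')^2 \<partial>q') = (\<integral>y. (tmap \<mu> \<sigma> q y - \<mu>)^2 \<partial>q)" unfolding q'_def mq[unfolded q'_def]
    by (rule integral_distr[OF mfq]) simp
  also have "\<dots> = (\<integral>y. c^2 * (y - m)^2 \<partial>q)" unfolding f by (simp add: power2_eq_square algebra_simps)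
  also have "\<dots> = c^2 * s^2" using lf(4) by (simp add: m_def s_def)
  finally have "std_dev q' = sqrt ((c * s)^2)" by (simp add: std_dev_def power_mult_distrib)
  also have "\<dots> = c * s" using lf(5) \<sigma> by (simp add: c_def s_def cfac_def)
  also have "\<dots> \<le> \<sigma>" using lf(5) \<sigma> by (simp add: c_def s_def cfac_def)
  finally show "std_dev q' \<le> \<sigma>" .
  show "W2sq (gauss \<mu> \<sigma>) q' \<le> W2sq (gauss \<mu> \<sigma>) q"
    unfolding W2sq_def
  proof (rule INF_greatest)
    fix \<pi> assume pi: "\<pi> \<in> couplings (gauss \<mu> \<sigma>) q"
    note cf = coupling_facts[OF pi]
    interpret P: prob_space \<pi> by (rule cf(1))
    define T where "T = (\<lambda>z::real\<times>real. (fst z, tmap \<mu> \<sigma> q (snd z)))"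
    have mT0: "T \<in> measurable (borel \<Otimes>\<^sub>M borel) (borel \<Otimes>\<^sub>M borel)" unfolding T_def by measurable
    have mT: "T \<in> measurable \<pi> borel"
      using mT0 by (simp add: measurable_cong_sets[OF cf(2) refl] borel_prod)
    have mT': "T \<in> measurable \<pi> (borel \<Otimes>\<^sub>M borel)" using mT by (simp add: borel_prod)
    define \<pi>' where "\<pi>' = distr \<pi> borel T"
    have "\<pi>' \<in> couplings (gauss \<mu> \<sigma>) q'"
      unfolding couplings_def
    proof (intro CollectI conjI)
      show "prob_space \<pi>'" unfolding \<pi>'_def by (rule P.prob_space_distr[OF mT])
      show "sets \<pi>' = sets borel" unfolding \<pi>'_def by simp
      have "distr \<pi>' borel fst = distr \<pi> borel (fst \<circ> T)" unfolding \<pi>'_def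
        by (rule distr_distr[OF _ mT]) (simp add: mfst_snd)
      also have "fst \<circ> T = fst" by (auto simp: T_def)
      finally show "distr \<pi>' borel fst = gauss \<mu> \<sigma>" using cf(3) by simp
      have "distr \<pi>' borel snd = distr \<pi> borel (snd \<circ> T)" unfolding \<pi>'_def
        by (rule distr_distr[OF _ mT]) (simp add: mfst_snd)
      also have "snd \<circ> T = tmap \<mu> \<sigma> q \<circ> snd" by (auto simp: T_def)
      also have "distr \<pi> borel (tmap \<mu> \<sigma> q \<circ> snd) = distr (distr \<pi> borel snd) borel (tmap \<mu> \<sigma> q)"
        by (rule distr_distr[symmetric, OF mf cf(6)])
      finally show "distr \<pi>' borel snd = q'" using cf(4) by (simp add: q'_def)
    qed
    then have "(INF \<pi>\<in>couplings (gauss \<mu> \<sigma>) q'. \<integral>\<^sup>+ z. ennreal ((fst z - snd z)\<^sup>2) \<partial>\<pi>)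
        \<le> (\<integral>\<^sup>+ z. ennreal ((fst z - snd z)\<^sup>2) \<partial>\<pi>')" by (rule INF_lower)
    also have "\<dots> = (\<integral>\<^sup>+ z. ennreal ((fst (T z) - snd (T z))\<^sup>2) \<partial>\<pi>)"
      unfolding \<pi>'_def by (rule nn_integral_distr[OF mT]) (simp add: mdiff2)
    also have "\<dots> = (\<integral>\<^sup>+z. ennreal ((fst z - tmap \<mu> \<sigma> q (snd z))^2) \<partial>\<pi>)" by (simp add: T_def)
    also have "\<dots> \<le> (\<integral>\<^sup>+z. ennreal ((fst z - snd z)^2) \<partial>\<pi>)" by (rule W2_transport[OF \<sigma> q pi])
    finally show "(INF \<pi>\<in>couplings (gauss \<mu> \<sigma>) q'. \<integral>\<^sup>+ z. ennreal ((fst z - snd z)\<^sup>2) \<partial>\<pi>)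
        \<le> (\<integral>\<^sup>+z. ennreal ((fst z - snd z)^2) \<partial>\<pi>)" .
  qed
qed




definition Psi :: "real measure \<Rightarrow> nat \<Rightarrow> nat \<Rightarrow> nat \<Rightarrow> ((nat \<Rightarrow> real) \<Rightarrow> nat \<Rightarrow> nat \<Rightarrow> real)
    \<Rightarrow> (nat \<Rightarrow> nat \<Rightarrow> (nat \<Rightarrow> real) measure) \<Rightarrow> nat \<Rightarrow> (real \<Rightarrow> real \<Rightarrow> ennreal) \<Rightarrow> ennreal" where
  "Psi pX n M L enc dec t g = (\<Sum>k<L. \<Sum>j<M. ennreal (1 / real L) *
        (\<integral>\<^sup>+ x. ennreal (enc x k j) * (\<integral>\<^sup>+ y. g (x t) (y t) \<partial>dec j k) \<partial>src pX n))"

lemma avg_Psi: "avg_distortion pX n M L enc dec = ennreal (1 / real n) * (\<Sum>t<n. Psi pX n M L enc dec t (\<lambda>a b. ennreal ((a - b)^2)))"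
  unfolding avg_distortion_def Psi_def ..

context
  fixes pX :: "real measure" and n M L enc dec
  assumes pX: "prob_space pX" "sets pX = sets borel"
  assumes code: "is_code n M L enc dec"
begin

abbreviation "BB \<equiv> PiM {..<n} (\<lambda>_. (borel :: real measure))"

lemma sets_src: "sets (src pX n) = sets BB"
  unfolding src_def by (rule sets_PiM_cong) (auto simp: pX)

lemma space_src: "space (src pX n) = space BB"
  using sets_src by (rule sets_eq_imp_space_eq)

lemma prob_src: "prob_space (src pX n)"
  unfolding src_def by (rule prob_space_PiM) (simp add: pX)

lemma enc_meas[measurable]: "(\<lambda>x. enc x k j) \<in> borel_measurable (src pX n)"
  using code by (simp add: is_code_def measurable_cong_sets[OF sets_src refl])

lemma dec_prob: "j < M \<Longrightarrow> k < L \<Longrightarrow> prob_space (dec j k)"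
  using code by (simp add: is_code_def)

lemma dec_sets: "j < M \<Longrightarrow> k < L \<Longrightarrow> sets (dec j k) = sets BB"
  using code by (simp add: is_code_def)

lemma enc_nonneg: "0 \<le> enc x k j" using code by (simp add: is_code_def)

lemma enc_sum: "k < L \<Longrightarrow> (\<Sum>j<M. enc x k j) = 1" using code by (simp add: is_code_def)

lemma enc_le1: "k < L \<Longrightarrow> j < M \<Longrightarrow> enc x k j \<le> 1"
  using member_le_sum[of j "{..<M}" "\<lambda>j. enc x k j"] enc_sum[of k x] enc_nonneg by auto

lemma L_pos: "0 < L" and M_pos: "0 < M" and n_pos: "0 < n"
  using code by (auto simp: is_code_def)

lemma inner_meas:
  assumes g[measurable]: "(\<lambda>(a,b). g a b) \<in> borel_measurable (borel \<Otimes>\<^sub>M borel)"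
  assumes jk: "j < M" "k < L" and t: "t < n"
  shows "(\<lambda>x. \<integral>\<^sup>+ y. g (x t) (y t) \<partial>dec j k) \<in> borel_measurable (src pX n)"
proof -
  interpret D: prob_space "dec j k" by (rule dec_prob[OF jk])
  have "(\<lambda>(x,y). g (x t) (y t)) \<in> borel_measurable (BB \<Otimes>\<^sub>M BB)"
  proof -
    have ti: "t \<in> {..<n}" using t by simp
    have "(\<lambda>(x,y). g (x t) (y t)) = (\<lambda>(a,b). g a b) \<circ> (\<lambda>z. (fst z t, snd z t))" by auto
    moreover have "(\<lambda>z::(nat\<Rightarrow>real)\<times>(nat\<Rightarrow>real). (fst z t, snd z t)) \<in> measurable (BB \<Otimes>\<^sub>M BB) (borel \<Otimes>\<^sub>M borel)"
      by (intro measurable_Pair measurable_compose[OF measurable_fst measurable_component_singleton[OF ti]]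
          measurable_compose[OF measurable_snd measurable_component_singleton[OF ti]])
    ultimately show ?thesis using g by (simp add: measurable_comp)
  qed
  then have "(\<lambda>(x,y). g (x t) (y t)) \<in> borel_measurable (src pX n \<Otimes>\<^sub>M dec j k)"
    by (simp add: measurable_cong_sets[OF sets_pair_measure_cong[OF sets_src dec_sets[OF jk]] refl])
  then show ?thesis by (rule D.borel_measurable_nn_integral)
qed

lemma sect_meas:
  assumes g: "(\<lambda>(a,b). g a b) \<in> borel_measurable (borel \<Otimes>\<^sub>M borel)"
  shows "(\<lambda>b. g a b) \<in> borel_measurable borel"
proof -
  have "(\<lambda>(a,b). g a b) \<circ> Pair a \<in> borel_measurable borel"
    by (rule measurable_comp[OF _ g]) (rule measurable_Pair1', simp)
  then show ?thesis by (simp add: comp_def)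
qed

lemma sect_meas_dec:
  assumes g: "(\<lambda>(a,b). g a b) \<in> borel_measurable (borel \<Otimes>\<^sub>M borel)"
  assumes jk: "j < M" "k < L" and t: "t < n"
  shows "(\<lambda>y. g a (y t)) \<in> borel_measurable (dec j k)"
proof -
  have ti: "t \<in> {..<n}" using t by simp
  have "(\<lambda>b. g a b) \<circ> (\<lambda>y::nat\<Rightarrow>real. y t) \<in> borel_measurable BB"
    by (rule measurable_comp[OF measurable_component_singleton[OF ti] sect_meas[OF g]])
  then have "(\<lambda>y. g a (y t)) \<in> borel_measurable BB" by (simp add: comp_def)
  then show ?thesis by (simp add: measurable_cong_sets[OF dec_sets[OF jk] refl])
qed

lemma Psi_add:
  assumes g: "(\<lambda>(a,b). g a b) \<in> borel_measurable (borel \<Otimes>\<^sub>M borel)"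
  assumes h: "(\<lambda>(a,b). h a b) \<in> borel_measurable (borel \<Otimes>\<^sub>M borel)"
  assumes t: "t < n"
  shows "Psi pX n M L enc dec t (\<lambda>a b. g a b + h a b) = Psi pX n M L enc dec t g + Psi pX n M L enc dec t h"
proof -
  have tm: "ennreal (1 / real L) * (\<integral>\<^sup>+ x. ennreal (enc x k j) * (\<integral>\<^sup>+ y. g (x t) (y t) + h (x t) (y t) \<partial>dec j k) \<partial>src pX n)
    = ennreal (1 / real L) * (\<integral>\<^sup>+ x. ennreal (enc x k j) * (\<integral>\<^sup>+ y. g (x t) (y t) \<partial>dec j k) \<partial>src pX n)
    + ennreal (1 / real L) * (\<integral>\<^sup>+ x. ennreal (enc x k j) * (\<integral>\<^sup>+ y. h (x t) (y t) \<partial>dec j k) \<partial>src pX n)"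
    if jk: "j < M" "k < L" for j k
  proof -
    have "(\<integral>\<^sup>+ x. ennreal (enc x k j) * (\<integral>\<^sup>+ y. g (x t) (y t) + h (x t) (y t) \<partial>dec j k) \<partial>src pX n)
      = (\<integral>\<^sup>+ x. ennreal (enc x k j) * (\<integral>\<^sup>+ y. g (x t) (y t) \<partial>dec j k) + ennreal (enc x k j) * (\<integral>\<^sup>+ y. h (x t) (y t) \<partial>dec j k) \<partial>src pX n)"
      by (intro nn_integral_cong)
         (simp only: nn_integral_add[OF sect_meas_dec[OF g jk t] sect_meas_dec[OF h jk t]] distrib_left)
    also have "\<dots> = (\<integral>\<^sup>+ x. ennreal (enc x k j) * (\<integral>\<^sup>+ y. g (x t) (y t) \<partial>dec j k) \<partial>src pX n)
         + (\<integral>\<^sup>+ x. ennreal (enc x k j) * (\<integral>\<^sup>+ y. h (x t) (y t) \<partial>dec j k) \<partial>src pX n)"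
      using inner_meas[OF g jk t] inner_meas[OF h jk t] by (intro nn_integral_add) auto
    finally show ?thesis by (simp only: distrib_left)
  qed
  show ?thesis unfolding Psi_def
    by (subst sum.distrib[symmetric], subst sum.distrib[symmetric],
        rule sum.cong[OF refl], rule sum.cong[OF refl], rule tm) auto
qed

lemma Psi_mono:
  assumes "\<And>a b. g a b \<le> h a b"
  shows "Psi pX n M L enc dec t g \<le> Psi pX n M L enc dec t h"
  unfolding Psi_def
  by (intro sum_mono mult_left_mono nn_integral_mono) (auto intro: assms)

lemma Psi_mx:
  assumes h: "h \<in> borel_measurable borel" and t: "t < n"
  shows "Psi pX n M L enc dec t (\<lambda>a b. h a) = (\<integral>\<^sup>+a. h a \<partial>pX)"
proof -
  have ti: "t \<in> {..<n}" using t by simp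
  have mt: "(\<lambda>x. x t) \<in> measurable (src pX n) borel"
    using measurable_component_singleton[OF ti, of "\<lambda>_. borel"] by (simp add: measurable_cong_sets[OF sets_src refl])
  have hx[measurable]: "(\<lambda>x. h (x t)) \<in> borel_measurable (src pX n)" using measurable_comp[OF mt h] by (simp add: comp_def)
  have inner: "(\<integral>\<^sup>+ y. h (x t) \<partial>dec j k) = h (x t)" if jk: "j < M" "k < L" for x j k
    using prob_space.emeasure_space_1[OF dec_prob[OF jk]] by simp
  have "Psi pX n M L enc dec t (\<lambda>a b. h a) = (\<Sum>k<L. ennreal (1 / real L) * (\<Sum>j<M. \<integral>\<^sup>+ x. ennreal (enc x k j) * h (x t) \<partial>src pX n))"
    unfolding Psi_def sum_distrib_left
    by (rule sum.cong[OF refl], rule sum.cong[OF refl]) (simp add: prob_space.emeasure_space_1[OF dec_prob])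
  also have "\<dots> = (\<Sum>k<L. ennreal (1 / real L) * (\<integral>\<^sup>+ x. h (x t) \<partial>src pX n))"
  proof (intro sum.cong refl arg_cong2[where f="(*)"])
    fix k assume k: "k \<in> {..<L}"
    have "(\<Sum>j<M. \<integral>\<^sup>+ x. ennreal (enc x k j) * h (x t) \<partial>src pX n) = (\<integral>\<^sup>+ x. (\<Sum>j<M. ennreal (enc x k j) * h (x t)) \<partial>src pX n)"
      by (rule nn_integral_sum[symmetric]) measurable
    also have "\<dots> = (\<integral>\<^sup>+ x. h (x t) \<partial>src pX n)"
    proof (rule nn_integral_cong)
      fix x
      have "(\<Sum>j<M. ennreal (enc x k j) * h (x t)) = (\<Sum>j<M. ennreal (enc x k j)) * h (x t)"
        by (simp add: sum_distrib_right)
      also have "(\<Sum>j<M. ennreal (enc x k j)) = ennreal (\<Sum>j<M. enc x k j)"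
        by (rule sum_ennreal) (rule enc_nonneg)
      also have "\<dots> = 1" using k enc_sum by simp
      finally show "(\<Sum>j<M. ennreal (enc x k j) * h (x t)) = h (x t)" by simp
    qed
    finally show "(\<Sum>j<M. \<integral>\<^sup>+ x. ennreal (enc x k j) * h (x t) \<partial>src pX n) = (\<integral>\<^sup>+ x. h (x t) \<partial>src pX n)" .
  qed
  also have "\<dots> = (of_nat L * ennreal (1 / real L)) * (\<integral>\<^sup>+ x. h (x t) \<partial>src pX n)"
    by (simp add: mult.assoc)
  also have "\<dots> = (\<integral>\<^sup>+ a. h a \<partial>pX)"
  proof -
    have L1: "of_nat L * ennreal (1 / real L) = 1"
      using L_pos by (simp add: ennreal_of_nat_eq_real_of_nat ennreal_mult''[symmetric])
    have mt': "(\<lambda>x. x t) \<in> measurable (src pX n) pX" using mt by (simp add: measurable_cong_sets[OF refl pX(2)])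
    have "distr (src pX n) pX (\<lambda>x. x t) = pX"
      unfolding src_def using t by (intro distr_PiM_component) (auto simp: pX)
    moreover have "(\<integral>\<^sup>+ a. h a \<partial>distr (src pX n) pX (\<lambda>x. x t)) = (\<integral>\<^sup>+ x. h (x t) \<partial>src pX n)"
      by (rule nn_integral_distr[OF mt']) (simp add: measurable_cong_sets[OF pX(2) refl] h)
    ultimately have "(\<integral>\<^sup>+ x. h (x t) \<partial>src pX n) = (\<integral>\<^sup>+ a. h a \<partial>pX)" by simp
    then show ?thesis by (simp only: L1 mult_1)
  qed
  finally show ?thesis .
qed

end



context
  fixes pX :: "real measure" and n M L enc dec
  assumes pX: "prob_space pX" "sets pX = sets borel"
  assumes code: "is_code n M L enc dec"
begin

lemma prob_em: "prob_space P \<Longrightarrow> emeasure P A = ennreal (measure P A)"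
  by (rule finite_measure.emeasure_eq_measure[OF prob_space.finite_measure])

definition "wt k j = (1 / real L) * (\<integral>x. enc x k j \<partial>src pX n)"

lemma enc_integrable: "k < L \<Longrightarrow> j < M \<Longrightarrow> integrable (src pX n) (\<lambda>x. enc x k j)"
proof -
  assume kj: "k < L" "j < M"
  interpret S: prob_space "src pX n" by (rule prob_src[OF pX code])
  show ?thesis
    by (rule S.integrable_const_bound[where B=1])
       (use enc_le1[OF pX code kj] enc_nonneg[OF pX code] enc_meas[OF pX code] in auto)
qed

lemma wt_nonneg: "0 \<le> wt k j"
  unfolding wt_def using enc_nonneg[OF pX code] by (auto intro!: Bochner_Integration.integral_nonneg)

lemma Psi_term:
  assumes kj: "k < L" "j < M"
  shows "ennreal (1 / real L) * (\<integral>\<^sup>+ x. ennreal (enc x k j) * c \<partial>src pX n) = ennreal (wt k j) * c"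
proof -
  have "(\<integral>\<^sup>+ x. ennreal (enc x k j) * c \<partial>src pX n) = (\<integral>\<^sup>+ x. ennreal (enc x k j) \<partial>src pX n) * c"
    by (rule nn_integral_multc) (use enc_meas[OF pX code] in simp)
  also have "(\<integral>\<^sup>+ x. ennreal (enc x k j) \<partial>src pX n) = ennreal (\<integral>x. enc x k j \<partial>src pX n)"
    by (rule nn_integral_eq_integral[OF enc_integrable[OF kj]]) (simp add: enc_nonneg[OF pX code])
  finally have l: "ennreal (1 / real L) * (\<integral>\<^sup>+ x. ennreal (enc x k j) * c \<partial>src pX n) = ennreal (1 / real L) * (ennreal (\<integral>x. enc x k j \<partial>src pX n) * c)"
    by simp
  have I0: "0 \<le> (\<integral>x. enc x k j \<partial>src pX n)"
    using enc_nonneg[OF pX code] by (auto intro!: Bochner_Integration.integral_nonneg)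
  have e: "ennreal ((1 / real L) * (\<integral>x. enc x k j \<partial>src pX n)) = ennreal (1 / real L) * ennreal (\<integral>x. enc x k j \<partial>src pX n)"
    by (rule ennreal_mult) (auto simp: I0)
  show ?thesis unfolding l wt_def e by (simp only: mult.assoc)
qed

lemma mixture:
  assumes q: "real_law q" and rec: "recon_iid pX n M L enc dec q"
  assumes g: "g \<in> borel_measurable (BB n)"
  shows "(\<integral>\<^sup>+ y. g y \<partial>PiM {..<n} (\<lambda>_. q)) = (\<Sum>k<L. \<Sum>j<M. ennreal (wt k j) * (\<integral>\<^sup>+ y. g y \<partial>dec j k))"
proof -
  define W where "W = density (count_space ({..<L} \<times> {..<M})) (\<lambda>(k,j). ennreal (wt k j))"
  define N where "N = (\<lambda>(k::nat,j::nat). dec j k)"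
  have spW: "space W = {..<L} \<times> {..<M}" by (simp add: W_def)
  have ne: "space W \<noteq> {}" using L_pos[OF pX code] M_pos[OF pX code] by (auto simp: spW)
  have N: "N \<in> measurable W (subprob_algebra (BB n))"
    unfolding W_def
    by (subst measurable_cong_sets[OF sets_density refl])
       (auto simp: N_def space_subprob_algebra dec_sets[OF pX code] intro!: prob_space_imp_subprob_space dec_prob[OF pX code])
  have sq: "sets (PiM {..<n} (\<lambda>_. q)) = sets (BB n)"
    using q by (intro sets_PiM_cong) (auto simp: real_law_def)
  have pq: "prob_space (PiM {..<n} (\<lambda>_. q))"
    using q by (intro prob_space_PiM) (auto simp: real_law_def)
  have int: "(\<integral>\<^sup>+ x. f x \<partial>W) = (\<Sum>k<L. \<Sum>j<M. ennreal (wt k j) * f (k, j))" for f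
  proof -
    have "(\<integral>\<^sup>+ x. f x \<partial>W) = (\<integral>\<^sup>+ x. (\<lambda>(k,j). ennreal (wt k j)) x * f x \<partial>count_space ({..<L} \<times> {..<M}))"
      unfolding W_def by (rule nn_integral_density) auto
    also have "\<dots> = (\<Sum>x\<in>{..<L} \<times> {..<M}. (\<lambda>(k,j). ennreal (wt k j)) x * f x)"
      by (rule nn_integral_count_space_finite) simp
    also have "\<dots> = (\<Sum>x\<in>{..<L} \<times> {..<M}. (\<lambda>(k,j). ennreal (wt k j) * f (k, j)) x)"
      by (rule sum.cong) (auto split: prod.split)
    also have "\<dots> = (\<Sum>k<L. \<Sum>j<M. ennreal (wt k j) * f (k, j))"
      by (simp only: sum.cartesian_product)
    finally show ?thesis .
  qed
  have eq: "W \<bind> N = PiM {..<n} (\<lambda>_. q)"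
  proof (rule measure_eqI)
    have sN: "\<And>x. x \<in> space W \<Longrightarrow> sets (N x) = sets (BB n)"
      by (auto simp: spW N_def dec_sets[OF pX code])
    have sB: "sets (W \<bind> N) = sets (BB n)" by (rule sets_bind[OF sN ne])
    show "sets (W \<bind> N) = sets (PiM {..<n} (\<lambda>_. q))" using sB sq by simp
    fix A assume A: "A \<in> sets (W \<bind> N)"
    then have A': "A \<in> sets (BB n)" using sB by simp
    have "emeasure (W \<bind> N) A = (\<integral>\<^sup>+ x. emeasure (N x) A \<partial>W)"
      by (rule emeasure_bind[OF ne N A'])
    also have "\<dots> = (\<Sum>k<L. \<Sum>j<M. ennreal (wt k j) * emeasure (dec j k) A)"
      by (simp add: int N_def)
    also have "\<dots> = (\<Sum>k<L. \<Sum>j<M. ennreal (wt k j * measure (dec j k) A))"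
      by (intro sum.cong refl) (simp add: prob_em[OF dec_prob[OF pX code]] ennreal_mult'' wt_nonneg)
    also have "\<dots> = ennreal (\<Sum>k<L. \<Sum>j<M. wt k j * measure (dec j k) A)"
      by (simp add: wt_nonneg sum_nonneg)
    also have "(\<Sum>k<L. \<Sum>j<M. wt k j * measure (dec j k) A) = recon_prob pX n M L enc dec A"
      by (simp add: recon_prob_def wt_def mult.assoc)
    also have "\<dots> = measure (PiM {..<n} (\<lambda>_. q)) A"
      using rec A' by (simp add: recon_iid_def)
    also have "ennreal \<dots> = emeasure (PiM {..<n} (\<lambda>_. q)) A"
      by (simp add: prob_em[OF pq])
    finally show "emeasure (W \<bind> N) A = emeasure (PiM {..<n} (\<lambda>_. q)) A" .
  qed
  have "(\<integral>\<^sup>+ y. g y \<partial>PiM {..<n} (\<lambda>_. q)) = (\<integral>\<^sup>+ y. g y \<partial>(W \<bind> N))" by (simp add: eq)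
  also have "\<dots> = (\<integral>\<^sup>+ x. \<integral>\<^sup>+ y. g y \<partial>N x \<partial>W)"
    by (rule nn_integral_bind[OF g N])
  also have "\<dots> = (\<Sum>k<L. \<Sum>j<M. ennreal (wt k j) * (\<integral>\<^sup>+ y. g y \<partial>dec j k))"
    by (simp add: int N_def)
  finally show ?thesis .
qed

end



context
  fixes pX :: "real measure" and n M L enc dec
  assumes pX: "prob_space pX" "sets pX = sets borel"
  assumes code: "is_code n M L enc dec"
begin

lemma Psi_my:
  assumes q: "real_law q" and rec: "recon_iid pX n M L enc dec q"
  assumes h: "h \<in> borel_measurable borel" and t: "t < n"
  shows "Psi pX n M L enc dec t (\<lambda>a b. h b) = (\<integral>\<^sup>+b. h b \<partial>q)"
proof -
  have ti: "t \<in> {..<n}" using t by simp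
  have g: "(\<lambda>y. h (y t)) \<in> borel_measurable (BB n)"
  proof -
    have "h \<circ> (\<lambda>y::nat\<Rightarrow>real. y t) \<in> borel_measurable (BB n)"
      by (rule measurable_comp[OF measurable_component_singleton[OF ti] h])
    then show ?thesis by (simp add: comp_def)
  qed
  have "Psi pX n M L enc dec t (\<lambda>a b. h b) = (\<Sum>k<L. \<Sum>j<M. ennreal (wt pX n L enc k j) * (\<integral>\<^sup>+ y. h (y t) \<partial>dec j k))"
    unfolding Psi_def
    by (rule sum.cong[OF refl], rule sum.cong[OF refl], rule Psi_term[OF pX code]) auto
  also have "\<dots> = (\<integral>\<^sup>+ y. h (y t) \<partial>PiM {..<n} (\<lambda>_. q))"
    by (rule mixture[OF pX code q rec g, symmetric])
  also have "\<dots> = (\<integral>\<^sup>+b. h b \<partial>q)"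
  proof -
    have sq: "sets q = sets borel" using q by (simp add: real_law_def)
    have pq: "prob_space q" using q by (simp add: real_law_def)
    have mt: "(\<lambda>x. x t) \<in> measurable (PiM {..<n} (\<lambda>_. q)) q"
      by (rule measurable_component_singleton[OF ti])
    have "distr (PiM {..<n} (\<lambda>_. q)) q (\<lambda>x. x t) = q"
      using t by (intro distr_PiM_component) (auto simp: pq)
    moreover have "(\<integral>\<^sup>+ a. h a \<partial>distr (PiM {..<n} (\<lambda>_. q)) q (\<lambda>x. x t)) = (\<integral>\<^sup>+ x. h (x t) \<partial>PiM {..<n} (\<lambda>_. q))"
      by (rule nn_integral_distr[OF mt]) (simp add: measurable_cong_sets[OF sq refl] h)
    ultimately show ?thesis by simp
  qed
  finally show ?thesis .
qed

end

lemma code_transport: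
  assumes \<sigma>: "0 < \<sigma>" and q: "real_law q" "integrable q (\<lambda>x. x^2)"
  assumes code: "is_code n M L enc dec" and rec: "recon_iid (gauss \<mu> \<sigma>) n M L enc dec q" and t: "t < n"
  shows "Psi (gauss \<mu> \<sigma>) n M L enc dec t (\<lambda>a b. ennreal ((a - tmap \<mu> \<sigma> q b)^2))
       \<le> Psi (gauss \<mu> \<sigma>) n M L enc dec t (\<lambda>a b. ennreal ((a - b)^2))"
proof -
  have pX: "prob_space (gauss \<mu> \<sigma>)" "sets (gauss \<mu> \<sigma>) = sets borel" using gauss_prob[OF \<sigma>] by auto
  show ?thesis
  proof (rule transport[OF \<sigma> q])
    show "Psi (gauss \<mu> \<sigma>) n M L enc dec t (\<lambda>a b. g a b + h a b) = Psi (gauss \<mu> \<sigma>) n M L enc dec t g + Psi (gauss \<mu> \<sigma>) n M L enc dec t h"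
      if "(\<lambda>(a,b). g a b) \<in> borel_measurable (borel \<Otimes>\<^sub>M borel)" "(\<lambda>(a,b). h a b) \<in> borel_measurable (borel \<Otimes>\<^sub>M borel)" for g h
      by (rule Psi_add[OF pX code that t])
    show "Psi (gauss \<mu> \<sigma>) n M L enc dec t g \<le> Psi (gauss \<mu> \<sigma>) n M L enc dec t h" if "\<And>a b. g a b \<le> h a b" for g h
      by (rule Psi_mono[OF pX code that])
    show "Psi (gauss \<mu> \<sigma>) n M L enc dec t (\<lambda>a b. h a) = (\<integral>\<^sup>+a. h a \<partial>gauss \<mu> \<sigma>)" if "h \<in> borel_measurable borel" for h
      by (rule Psi_mx[OF pX code that t])
    show "Psi (gauss \<mu> \<sigma>) n M L enc dec t (\<lambda>a b. h b) = (\<integral>\<^sup>+a. h a \<partial>q)" if "h \<in> borel_measurable borel" for h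
      by (rule Psi_my[OF pX code q(1) rec that t])
  qed
qed




lemma compose_meas:
  assumes f: "f \<in> borel_measurable borel"
  shows "compose {..<n} f \<in> measurable (PiM {..<n} (\<lambda>_. (borel :: real measure))) (PiM {..<n} (\<lambda>_. (borel :: real measure)))"
  unfolding compose_def
  apply (rule measurable_restrict)
  subgoal for i
    using measurable_comp[OF measurable_component_singleton[of i "{..<n}" "\<lambda>_. borel"] f] by (simp add: comp_def)
  done

lemma new_code:
  fixes \<mu> \<sigma> :: real and q :: "real measure"
  assumes \<sigma>: "0 < \<sigma>" and q: "real_law q" "integrable q (\<lambda>x. x^2)"
  assumes code: "is_code n M L enc dec" and rec: "recon_iid (gauss \<mu> \<sigma>) n M L enc dec q"
  defines "dec' \<equiv> \<lambda>j k. distr (dec j k) (PiM {..<n} (\<lambda>_. (borel :: real measure))) (compose {..<n} (tmap \<mu> \<sigma> q))"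
  shows "is_code n M L enc dec'"
    "recon_iid (gauss \<mu> \<sigma>) n M L enc dec' (distr q borel (tmap \<mu> \<sigma> q))"
    "avg_distortion (gauss \<mu> \<sigma>) n M L enc dec' \<le> avg_distortion (gauss \<mu> \<sigma>) n M L enc dec"
proof -
  let ?B = "PiM {..<n} (\<lambda>_. (borel :: real measure))"
  let ?F = "compose {..<n} (tmap \<mu> \<sigma> q)"
  let ?q' = "distr q borel (tmap \<mu> \<sigma> q)"
  have pX: "prob_space (gauss \<mu> \<sigma>)" "sets (gauss \<mu> \<sigma>) = sets borel" using gauss_prob[OF \<sigma>] by auto
  have mf: "tmap \<mu> \<sigma> q \<in> borel_measurable borel" unfolding tmap_def by measurable
  have mF: "?F \<in> measurable ?B ?B" by (rule compose_meas[OF mf])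
  have mFd: "?F \<in> measurable (dec j k) ?B" if "j < M" "k < L" for j k
    using mF by (simp add: measurable_cong_sets[OF dec_sets[OF pX code that] refl])
  show "is_code n M L enc dec'"
    using code unfolding is_code_def dec'_def
    by (auto intro!: prob_space.prob_space_distr mFd dec_prob[OF pX code])
  show "avg_distortion (gauss \<mu> \<sigma>) n M L enc dec' \<le> avg_distortion (gauss \<mu> \<sigma>) n M L enc dec"
    unfolding avg_Psi
  proof (intro mult_left_mono sum_mono)
    fix t assume "t \<in> {..<n}"
    then have t: "t < n" by simp
    have inner: "(\<integral>\<^sup>+ y. ennreal ((x t - y t)^2) \<partial>dec' j k) = (\<integral>\<^sup>+ y. ennreal ((x t - tmap \<mu> \<sigma> q (y t))^2) \<partial>dec j k)"
      if jk: "j < M" "k < L" for x j k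
    proof -
      have mg: "(\<lambda>y. ennreal ((x t - y t)^2)) \<in> borel_measurable ?B"
        by measurable (simp add: t)
      have "(\<integral>\<^sup>+ y. ennreal ((x t - y t)^2) \<partial>dec' j k) = (\<integral>\<^sup>+ y. ennreal ((x t - ?F y t)^2) \<partial>dec j k)"
        unfolding dec'_def by (rule nn_integral_distr[OF mFd[OF jk]]) (simp add: mg)
      also have "\<dots> = (\<integral>\<^sup>+ y. ennreal ((x t - tmap \<mu> \<sigma> q (y t))^2) \<partial>dec j k)"
        using t by (simp add: compose_def)
      finally show ?thesis .
    qed
    have "Psi (gauss \<mu> \<sigma>) n M L enc dec' t (\<lambda>a b. ennreal ((a - b)^2))
        = Psi (gauss \<mu> \<sigma>) n M L enc dec t (\<lambda>a b. ennreal ((a - tmap \<mu> \<sigma> q b)^2))"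
      unfolding Psi_def by (intro sum.cong refl) (simp add: inner)
    also have "\<dots> \<le> Psi (gauss \<mu> \<sigma>) n M L enc dec t (\<lambda>a b. ennreal ((a - b)^2))"
      by (rule code_transport[OF \<sigma> q code rec t])
    finally show "Psi (gauss \<mu> \<sigma>) n M L enc dec' t (\<lambda>a b. ennreal ((a - b)^2)) \<le> Psi (gauss \<mu> \<sigma>) n M L enc dec t (\<lambda>a b. ennreal ((a - b)^2))" .
  qed simp
  show "recon_iid (gauss \<mu> \<sigma>) n M L enc dec' ?q'"
    unfolding recon_iid_def
  proof
    fix A assume A: "A \<in> sets ?B"
    have sq: "sets q = sets borel" and pq: "prob_space q" using q by (auto simp: real_law_def)
    note tq = tq_facts[OF \<sigma> q, of \<mu>]
    have pq': "prob_space ?q'" and sq': "sets ?q' = sets borel" using tq(1) by (auto simp: real_law_def)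
    define A' where "A' = ?F -` A \<inter> space ?B"
    have A'S: "A' \<in> sets ?B" unfolding A'_def by (rule measurable_sets[OF mF A])
    have "recon_prob (gauss \<mu> \<sigma>) n M L enc dec' A = recon_prob (gauss \<mu> \<sigma>) n M L enc dec A'"
      unfolding recon_prob_def
    proof (rule sum.cong[OF refl], rule sum.cong[OF refl])
      fix k j assume "k \<in> {..<L}" "j \<in> {..<M}"
      then have jk: "j < M" "k < L" by auto
      have "measure (dec' j k) A = measure (dec j k) (?F -` A \<inter> space (dec j k))"
        unfolding dec'_def by (rule measure_distr[OF mFd[OF jk] A])
      also have "space (dec j k) = space ?B" by (rule sets_eq_imp_space_eq[OF dec_sets[OF pX code jk]])
      finally show "1 / real L * (\<integral>x. enc x k j \<partial>src (gauss \<mu> \<sigma>) n) * measure (dec' j k) A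
          = 1 / real L * (\<integral>x. enc x k j \<partial>src (gauss \<mu> \<sigma>) n) * measure (dec j k) A'"
        by (simp add: A'_def)
    qed
    also have "\<dots> = measure (PiM {..<n} (\<lambda>_. q)) A'"
      using rec A'S by (simp add: recon_iid_def)
    also have "\<dots> = measure (distr (PiM {..<n} (\<lambda>_. q)) ?B ?F) A"
    proof -
      have sP: "sets (PiM {..<n} (\<lambda>_. q)) = sets ?B" by (rule sets_PiM_cong) (auto simp: sq)
      have mF': "?F \<in> measurable (PiM {..<n} (\<lambda>_. q)) ?B" using mF by (simp add: measurable_cong_sets[OF sP refl])
      have "space (PiM {..<n} (\<lambda>_. q)) = space ?B" by (rule sets_eq_imp_space_eq[OF sP])
      then show ?thesis by (simp add: measure_distr[OF mF' A] A'_def)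
    qed
    also have "distr (PiM {..<n} (\<lambda>_. q)) ?B ?F = PiM {..<n} (\<lambda>_. ?q')"
    proof -
      have sB: "sets ?B = sets (PiM {..<n} (\<lambda>_. ?q'))" by (rule sets_PiM_cong) (auto simp: sq')
      have mfq: "tmap \<mu> \<sigma> q \<in> measurable q ?q'"
        using mf by (subst measurable_cong_sets[OF sq sq']) simp
      have mfq2: "tmap \<mu> \<sigma> q \<in> borel_measurable q"
        using mf by (subst measurable_cong_sets[OF sq refl]) simp
      have "distr (PiM {..<n} (\<lambda>_. q)) ?B ?F = distr (PiM {..<n} (\<lambda>_. q)) (PiM {..<n} (\<lambda>_. ?q')) ?F"
        by (rule distr_cong[OF refl sB]) simp
      also have "\<dots> = PiM {..<n} (\<lambda>_. distr q ?q' (tmap \<mu> \<sigma> q))"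
        by (rule distr_PiM_finite_prob_space') (auto simp: pq pq' mfq mfq2)
      also have "distr q ?q' (tmap \<mu> \<sigma> q) = ?q'"
        by (rule distr_cong[OF refl sq']) simp
      finally show ?thesis .
    qed
    finally show "recon_prob (gauss \<mu> \<sigma>) n M L enc dec' A = measure (PiM {..<n} (\<lambda>_. ?q')) A" .
  qed
qed




lemma sumW: "1 \<le> n \<Longrightarrow> ennreal (1 / real n) * (\<Sum>t<n. W) = (W::ennreal)"
proof -
  assume n: "1 \<le> n"
  have "ennreal (1 / real n) * of_nat n = 1"
    using n by (simp add: ennreal_of_nat_eq_real_of_nat ennreal_mult''[symmetric])
  then show ?thesis by (simp add: mult.assoc[symmetric])
qed

theorem lemma3:
  fixes \<mu> \<sigma> R Rc P :: real
  assumes "0 < \<sigma>" and "0 \<le> R" and "0 \<le> Rc" and "0 \<le> P"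
  shows "D_perc R Rc P (gauss \<mu> \<sigma>) =
    (INF q \<in> {q. real_law q \<and> integrable q (\<lambda>x. x\<^sup>2) \<and> mean q = \<mu> \<and> std_dev q \<le> \<sigma>
                 \<and> W2sq (gauss \<mu> \<sigma>) q \<le> ennreal P}.
       D_marg R Rc (gauss \<mu> \<sigma>) q)"
proof (rule antisym)
  note \<sigma> = assms(1)
  show "D_perc R Rc P (gauss \<mu> \<sigma>) \<le> (INF q \<in> {q. real_law q \<and> integrable q (\<lambda>x. x\<^sup>2) \<and> mean q = \<mu> \<and> std_dev q \<le> \<sigma>
                 \<and> W2sq (gauss \<mu> \<sigma>) q \<le> ennreal P}. D_marg R Rc (gauss \<mu> \<sigma>) q)"
  proof (rule INF_greatest)
    fix q assume q: "q \<in> {q. real_law q \<and> integrable q (\<lambda>x. x\<^sup>2) \<and> mean q = \<mu> \<and> std_dev q \<le> \<sigma>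
                 \<and> W2sq (gauss \<mu> \<sigma>) q \<le> ennreal P}"
    show "D_perc R Rc P (gauss \<mu> \<sigma>) \<le> D_marg R Rc (gauss \<mu> \<sigma>) q"
      unfolding D_perc_def D_marg_def
    proof (rule Inf_superset_mono, safe)
      fix D n M L enc dec
      assume c: "is_code n M L enc dec" "ln (real M) / real n \<le> R" "ln (real L) / real n \<le> Rc"
        "avg_distortion (gauss \<mu> \<sigma>) n M L enc dec \<le> D" "recon_iid (gauss \<mu> \<sigma>) n M L enc dec q"
      have "1 \<le> n" using c(1) by (simp add: is_code_def)
      then have "ennreal (1 / real n) * (\<Sum>t<n. W2sq (gauss \<mu> \<sigma>) q) \<le> ennreal P" using q by (subst sumW) auto
      then show "\<exists>n M L enc dec q. is_code n M L enc dec \<and> ln (real M) / real n \<le> R \<and> ln (real L) / real n \<le> Rc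
          \<and> avg_distortion (gauss \<mu> \<sigma>) n M L enc dec \<le> D \<and> real_law q \<and> recon_iid (gauss \<mu> \<sigma>) n M L enc dec q
          \<and> ennreal (1 / real n) * (\<Sum>t<n. W2sq (gauss \<mu> \<sigma>) q) \<le> ennreal P"
        using c q by blast
    qed
  qed
  show "(INF q \<in> {q. real_law q \<and> integrable q (\<lambda>x. x\<^sup>2) \<and> mean q = \<mu> \<and> std_dev q \<le> \<sigma>
                 \<and> W2sq (gauss \<mu> \<sigma>) q \<le> ennreal P}. D_marg R Rc (gauss \<mu> \<sigma>) q) \<le> D_perc R Rc P (gauss \<mu> \<sigma>)"
    unfolding D_perc_def
  proof (rule Inf_greatest, safe)
    fix D n M L enc dec q
    assume c: "is_code n M L enc dec" "ln (real M) / real n \<le> R" "ln (real L) / real n \<le> Rc"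
      "avg_distortion (gauss \<mu> \<sigma>) n M L enc dec \<le> D" "real_law q" "recon_iid (gauss \<mu> \<sigma>) n M L enc dec q"
      "ennreal (1 / real n) * (\<Sum>t<n. W2sq (gauss \<mu> \<sigma>) q) \<le> ennreal P"
    have "1 \<le> n" using c(1) by (simp add: is_code_def)
    then have W: "W2sq (gauss \<mu> \<sigma>) q \<le> ennreal P" using c(7) by (subst (asm) sumW) auto
    then have "W2sq (gauss \<mu> \<sigma>) q < \<top>" by (rule order.strict_trans1) simp
    then have iq: "integrable q (\<lambda>x. x^2)" by (rule W2_finite_moment[OF \<sigma> c(5)])
    define q' where "q' = distr q borel (tmap \<mu> \<sigma> q)"
    define dec' where "dec' = (\<lambda>j k. distr (dec j k) (PiM {..<n} (\<lambda>_. (borel :: real measure))) (compose {..<n} (tmap \<mu> \<sigma> q)))"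
    note tq = tq_facts[OF \<sigma> c(5) iq, of \<mu>, folded q'_def]
    note nc = new_code[OF \<sigma> c(5) iq c(1) c(6), folded dec'_def q'_def]
    have q'T: "q' \<in> {q. real_law q \<and> integrable q (\<lambda>x. x\<^sup>2) \<and> mean q = \<mu> \<and> std_dev q \<le> \<sigma>
                 \<and> W2sq (gauss \<mu> \<sigma>) q \<le> ennreal P}"
      using tq W by auto
    have "D_marg R Rc (gauss \<mu> \<sigma>) q' \<le> D"
      unfolding D_marg_def
    proof (rule Inf_lower, safe)
      show "\<exists>n M L enc dec. is_code n M L enc dec \<and> ln (real M) / real n \<le> R \<and> ln (real L) / real n \<le> Rc
          \<and> avg_distortion (gauss \<mu> \<sigma>) n M L enc dec \<le> D \<and> recon_iid (gauss \<mu> \<sigma>) n M L enc dec q'"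
        using nc c(2,3,4) order.trans[OF nc(3) c(4)] by blast
    qed
    then show "(INF q \<in> {q. real_law q \<and> integrable q (\<lambda>x. x\<^sup>2) \<and> mean q = \<mu> \<and> std_dev q \<le> \<sigma>
                 \<and> W2sq (gauss \<mu> \<sigma>) q \<le> ennreal P}. D_marg R Rc (gauss \<mu> \<sigma>) q) \<le> D"
      using q'T by (meson INF_lower order.trans)
  qed
qed



end
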